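(* Let $\mathbf H$ be a random $N_r\times N_t$ complex matrix with i.i.d. entries. Then for every $\mathrm{snr}>0$, $$I^{\rm mmse}(\mathrm{snr},N_r,N_t)=N_t\Big(I^{\rm opt}(\mathrm{snr},N_r,N_t)-I^{\rm opt}\Big(\tfrac{N_t-1}{N_t}\mathrm{snr},N_r,N_t-1\Big)\Big),$$ where $I^{\rm opt}(\mathrm{snr},N_r,N)=E\big[\log_2\det(\mathbf I_{N_r}+\frac{\mathrm{snr}}{N}\mathbf G\mathbf G^\dagger)\big]$ for a random $N_r\times N$ matrix $\mathbf G$ with i.i.d. entries having the same distribution as those of $\mathbf H$.
   Context: The channel $\mathbf H$ is normalized so that $E[\mathrm{tr}(\mathbf H\mathbf H^\dagger)]=N_rN_t$. The MMSE output SINR of stream $i$ is $\gamma_i=1/\big[(\mathbf I_{N_t}+\frac{\mathrm{snr}}{N_t}\mathbf H^\dagger\mathbf H)^{-1}\big]_{i,i}-1$, and the MMSE achievable sum rate is $I^{\rm mmse}(\mathrm{snr},N_r,N_t)=\sum_{i=1}^{N_t}E[\log_2(1+\gamma_i)]$. *)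

theory Defs
  imports "HOL-Probability.Probability"
    "Jordan_Normal_Form.Determinant"
    "Jordan_Normal_Form.Gauss_Jordan_Elimination"
begin

definition herm :: "complex mat \<Rightarrow> complex mat" where
  "herm A = transpose_mat (map_mat cnj A)"

definition rand_mat_space :: "complex measure \<Rightarrow> nat \<Rightarrow> nat \<Rightarrow> ((nat \<times> nat) \<Rightarrow> complex) measure" where
  "rand_mat_space D m n = PiM ({0..<m} \<times> {0..<n}) (\<lambda>_. D)"

definition to_mat :: "nat \<Rightarrow> nat \<Rightarrow> ((nat \<times> nat) \<Rightarrow> complex) \<Rightarrow> complex mat" where
  "to_mat m n \<omega> = mat m n \<omega>"

text \<open>Optimal (capacity) sum rate:
  E[log2 det(I_Nr + snr/N G G^H)], G an Nr x N random matrix with i.i.d. entries of law D.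
  The determinant is real (and positive), we take its real part.\<close>
definition I_opt :: "complex measure \<Rightarrow> real \<Rightarrow> nat \<Rightarrow> nat \<Rightarrow> real" where
  "I_opt D snr Nr N =
     (\<integral>\<omega>. log 2 (Re (det (1\<^sub>m Nr + complex_of_real (snr / real N) \<cdot>\<^sub>m
         (to_mat Nr N \<omega> * herm (to_mat Nr N \<omega>))))) \<partial>(rand_mat_space D Nr N))"

definition sinr_mmse :: "real \<Rightarrow> nat \<Rightarrow> nat \<Rightarrow> complex mat \<Rightarrow> nat \<Rightarrow> real" where
  "sinr_mmse snr Nr Nt H i =
     1 / Re ((the (mat_inverse (1\<^sub>m Nt + complex_of_real (snr / real Nt) \<cdot>\<^sub>m (herm H * H)))) $$ (i, i)) - 1"

definition I_mmse :: "complex measure \<Rightarrow> real \<Rightarrow> nat \<Rightarrow> nat \<Rightarrow> real" where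
  "I_mmse D snr Nr Nt =
     (\<Sum>i<Nt. \<integral>\<omega>. log 2 (1 + sinr_mmse snr Nr Nt (to_mat Nr Nt \<omega>) i) \<partial>(rand_mat_space D Nr Nt))"

end

theory Submission
  imports Defs
begin

no_notation vec_nth (infixl "$" 90)

lemma herm_carrier[simp]: "herm H \<in> carrier_mat (dim_col H) (dim_row H)"
  unfolding herm_def by auto

lemma herm_dims[simp]: "dim_row (herm H) = dim_col H" "dim_col (herm H) = dim_row H"
  unfolding herm_def by auto

lemma herm_index[simp]: "i < dim_col H \<Longrightarrow> j < dim_row H \<Longrightarrow> herm H $$ (i,j) = cnj (H $$ (j,i))"
  unfolding herm_def by auto

lemma herm_herm[simp]: "herm (herm H) = H"
  by (rule eq_matI) auto

definition Gm :: "real \<Rightarrow> nat \<Rightarrow> complex mat \<Rightarrow> complex mat" where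
  "Gm c n H = 1\<^sub>m n + complex_of_real c \<cdot>\<^sub>m (herm H * H)"

lemma Gm_carrier[simp]: "H \<in> carrier_mat m n \<Longrightarrow> Gm c n H \<in> carrier_mat n n"
  unfolding Gm_def by auto

lemma Gm_index: assumes "H \<in> carrier_mat m n" "i < n" "j < n"
  shows "Gm c n H $$ (i,j) = (if i = j then 1 else 0) + of_real c * (\<Sum>r=0..<m. cnj (H$$(r,i)) * H$$(r,j))"
  using assms unfolding Gm_def by (auto simp: scalar_prod_def)

lemma Gm_mult_vec: assumes H: "H \<in> carrier_mat m n" and y: "y \<in> carrier_vec n" and k: "k < n"
  shows "(Gm c n H *\<^sub>v y) $ k = y $ k + of_real c * (\<Sum>r=0..<m. cnj (H$$(r,k)) * (\<Sum>j=0..<n. H$$(r,j) * y$j))"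
proof -
  have "(Gm c n H *\<^sub>v y) $ k = (\<Sum>j=0..<n. Gm c n H $$ (k,j) * y$j)"
    using Gm_carrier[OF H, of c] y k by (auto simp: scalar_prod_def)
  also have "\<dots> = (\<Sum>j=0..<n. (if k = j then 1 else 0) * y$j) + of_real c * (\<Sum>j=0..<n. (\<Sum>r=0..<m. cnj (H$$(r,k)) * H$$(r,j)) * y$j)"
    using H k by (simp add: Gm_index algebra_simps sum.distrib sum_distrib_left)
  also have "(\<Sum>j=0..<n. (if k = j then 1 else 0) * y$j) = (\<Sum>j=0..<n. (if k = j then y$j else 0))"
    by (rule sum.cong) auto
  also have "\<dots> = y $ k"
    using k by (simp add: sum.delta)
  also have "(\<Sum>j=0..<n. (\<Sum>r=0..<m. cnj (H$$(r,k)) * H$$(r,j)) * y$j) = (\<Sum>r=0..<m. cnj (H$$(r,k)) * (\<Sum>j=0..<n. H$$(r,j) * y$j))"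
    by (simp add: sum_distrib_left sum_distrib_right mult.assoc) (rule sum.swap)
  finally show ?thesis .
qed

lemma Gm_quad: assumes H: "H \<in> carrier_mat m n" and y: "y \<in> carrier_vec n"
  shows "(\<Sum>k=0..<n. cnj (y$k) * (Gm c n H *\<^sub>v y) $ k) =
     complex_of_real ((\<Sum>k=0..<n. (cmod (y$k))\<^sup>2) + c * (\<Sum>r=0..<m. (cmod (\<Sum>j=0..<n. H$$(r,j) * y$j))\<^sup>2))"
proof -
  define w where "w r = (\<Sum>j=0..<n. H$$(r,j) * y$j)" for r
  have "(\<Sum>k=0..<n. cnj (y$k) * (Gm c n H *\<^sub>v y) $ k) =
     (\<Sum>k=0..<n. cnj (y$k) * y$k) + of_real c * (\<Sum>k=0..<n. \<Sum>r=0..<m. cnj (y$k) * cnj (H$$(r,k)) * w r)"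
    using H y by (simp add: Gm_mult_vec w_def algebra_simps sum.distrib sum_distrib_left del: index_mult_mat_vec)
  also have "(\<Sum>k=0..<n. \<Sum>r=0..<m. cnj (y$k) * cnj (H$$(r,k)) * w r) = (\<Sum>r=0..<m. \<Sum>k=0..<n. cnj (y$k) * cnj (H$$(r,k)) * w r)"
    by (rule sum.swap)
  also have "\<dots> = (\<Sum>r=0..<m. (\<Sum>k=0..<n. cnj (y$k) * cnj (H$$(r,k))) * w r)"
    by (simp add: sum_distrib_right)
  also have "\<dots> = (\<Sum>r=0..<m. cnj (w r) * w r)"
    unfolding w_def by (simp add: mult.commute)
  also have "(\<Sum>k=0..<n. cnj (y$k) * y$k) + of_real c * (\<Sum>r=0..<m. cnj (w r) * w r) = 
     complex_of_real ((\<Sum>k=0..<n. (cmod (y$k))\<^sup>2) + c * (\<Sum>r=0..<m. (cmod (w r))\<^sup>2))"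
  proof -
    have e: "\<And>z::complex. cnj z * z = of_real ((cmod z)^2)" using complex_norm_square by (metis mult.commute of_real_power)
    show ?thesis by (simp only: e of_real_add of_real_mult of_real_sum)
  qed
  finally show ?thesis unfolding w_def .
qed


lemma Gm_det_nz: assumes H: "H \<in> carrier_mat m n" and c: "c \<ge> 0"
  shows "det (Gm c n H) \<noteq> 0"
proof
  assume "det (Gm c n H) = 0"
  then obtain v where v: "v \<in> carrier_vec n" "v \<noteq> 0\<^sub>v n" "Gm c n H *\<^sub>v v = 0\<^sub>v n"
    using det_0_iff_vec_prod_zero[OF Gm_carrier[OF H]] by blast
  have "complex_of_real ((\<Sum>k=0..<n. (cmod (v$k))\<^sup>2) + c * (\<Sum>r=0..<m. (cmod (\<Sum>j=0..<n. H$$(r,j) * v$j))\<^sup>2)) = 0"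
    using Gm_quad[OF H v(1), of c, symmetric] v(3) by simp
  then have "(\<Sum>k=0..<n. (cmod (v$k))\<^sup>2) + c * (\<Sum>r=0..<m. (cmod (\<Sum>j=0..<n. H$$(r,j) * v$j))\<^sup>2) = 0"
    by (simp only: of_real_eq_0_iff)
  moreover have "c * (\<Sum>r=0..<m. (cmod (\<Sum>j=0..<n. H$$(r,j) * v$j))\<^sup>2) \<ge> 0"
    using c by (intro mult_nonneg_nonneg sum_nonneg) auto
  moreover have "(\<Sum>k=0..<n. (cmod (v$k))\<^sup>2) \<ge> 0" by (intro sum_nonneg) auto
  ultimately have "(\<Sum>k=0..<n. (cmod (v$k))\<^sup>2) = 0" by linarith
  then have "\<forall>k\<in>{0..<n}. (cmod (v$k))\<^sup>2 = 0"
    by (subst (asm) sum_nonneg_eq_0_iff) auto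
  then have "v = 0\<^sub>v n" using v(1) by (intro eq_vecI) auto
  with v(2) show False by simp
qed

lemma Gm_inverse: assumes H: "H \<in> carrier_mat m n" and c: "c \<ge> 0"
  obtains B where "mat_inverse (Gm c n H) = Some B" "Gm c n H * B = 1\<^sub>m n" "B * Gm c n H = 1\<^sub>m n" "B \<in> carrier_mat n n"
proof -
  have U: "Gm c n H \<in> Units (ring_mat TYPE(complex) n undefined)"
    by (rule det_non_zero_imp_unit[OF Gm_carrier[OF H] Gm_det_nz[OF H c]])
  then obtain B where "mat_inverse (Gm c n H) = Some B"
    using mat_inverse(1)[OF Gm_carrier[OF H, of c], where b=undefined] by (cases "mat_inverse (Gm c n H)") auto
  with mat_inverse(2)[OF Gm_carrier[OF H] this] that show ?thesis by blast
qed

lemma Gm_inv_diag: assumes H: "H \<in> carrier_mat m n" and c: "c \<ge> 0"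
  and B: "B \<in> carrier_mat n n" "Gm c n H * B = 1\<^sub>m n" and i: "i < n"
  shows "\<exists>q. B $$ (i,i) = complex_of_real q \<and> 0 < q \<and> q \<le> 1"
proof -
  define y where "y = col B i"
  have y: "y \<in> carrier_vec n" using B i unfolding y_def by auto
  have Gy: "Gm c n H *\<^sub>v y = unit_vec n i"
    using col_mult2[OF Gm_carrier[OF H] B(1) i, of c] B(2) i unfolding y_def by simp
  define Q where "Q = (\<Sum>k=0..<n. (cmod (y$k))\<^sup>2) + c * (\<Sum>r=0..<m. (cmod (\<Sum>j=0..<n. H$$(r,j) * y$j))\<^sup>2)"
  have "(\<Sum>k=0..<n. cnj (y$k) * (Gm c n H *\<^sub>v y) $ k) = (\<Sum>k=0..<n. if k = i then cnj (y$k) else 0)"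
    unfolding Gy by (rule sum.cong) (use i in auto)
  also have "\<dots> = cnj (y $ i)" using i by (simp add: sum.delta)
  finally have "cnj (y $ i) = complex_of_real Q" using Gm_quad[OF H y, of c] unfolding Q_def by simp
  then have yi: "y $ i = complex_of_real Q" by (metis complex_cnj_cnj complex_cnj_complex_of_real)
  have Q1: "Q \<ge> (\<Sum>k=0..<n. (cmod (y$k))\<^sup>2)"
    unfolding Q_def using c by (auto intro!: mult_nonneg_nonneg sum_nonneg)
  have Q0: "Q \<ge> 0" using Q1 by (smt (verit) sum_nonneg zero_le_power2)
  have "(cmod (y$i))\<^sup>2 \<le> (\<Sum>k=0..<n. (cmod (y$k))\<^sup>2)"
    using i by (intro member_le_sum) auto
  then have "Q\<^sup>2 \<le> Q" using Q1 Q0 yi by simp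
  then have "Q \<le> 1"
  proof (cases "Q = 0")
    case False
    then have "Q > 0" using Q0 by simp
    moreover assume "Q\<^sup>2 \<le> Q"
    ultimately show ?thesis by (simp add: power2_eq_square)
  qed simp
  moreover have "Q \<noteq> 0"
  proof
    assume "Q = 0"
    then have "(\<Sum>k=0..<n. (cmod (y$k))\<^sup>2) = 0" using Q1 by (smt (verit) sum_nonneg zero_le_power2)
    then have "\<forall>k\<in>{0..<n}. (cmod (y$k))\<^sup>2 = 0"
      by (subst (asm) sum_nonneg_eq_0_iff) auto
    then have y0: "y = 0\<^sub>v n" using y by (intro eq_vecI) auto
    have "unit_vec n i = Gm c n H *\<^sub>v y" using Gy by simp
    also have "\<dots> = 0\<^sub>v n" unfolding y0 using Gm_carrier[OF H, of c]
      by (intro eq_vecI) (auto simp: scalar_prod_def)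
    finally have "unit_vec n i = (0\<^sub>v n :: complex vec)" .
    then show False using i by (metis index_unit_vec(2) index_zero_vec(1) zero_neq_one)
  qed
  ultimately show ?thesis using Q0 yi B i unfolding y_def by auto
qed


definition delcol :: "complex mat \<Rightarrow> nat \<Rightarrow> complex mat" where
  "delcol H i = mat (dim_row H) (dim_col H - 1) (\<lambda>(r,k). H $$ (r, if k < i then k else Suc k))"

lemma delcol_carrier: "H \<in> carrier_mat m n \<Longrightarrow> delcol H i \<in> carrier_mat m (n-1)"
  unfolding delcol_def by auto

lemma inv_diag_cofactor: assumes G: "G \<in> carrier_mat n n" and B: "B \<in> carrier_mat n n" "B * G = 1\<^sub>m n"
  and i: "i < n"
  shows "det G * B $$ (i,i) = det (mat_delete G i i)"
proof -
  have A: "adj_mat G \<in> carrier_mat n n" using adj_mat(1)[OF G] .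
  have "adj_mat G = (B * G) * adj_mat G" using B(2) A by simp
  also have "\<dots> = B * (G * adj_mat G)" by (rule assoc_mult_mat[OF B(1) G A])
  also have "\<dots> = B * (det G \<cdot>\<^sub>m 1\<^sub>m n)" using adj_mat(2)[OF G] by simp
  also have "\<dots> = det G \<cdot>\<^sub>m B" using B by (simp add: mult_smult_distrib[OF B(1) one_carrier_mat])
  finally have "adj_mat G $$ (i,i) = det G * B $$ (i,i)" using B i by simp
  moreover have "adj_mat G $$ (i,i) = det (mat_delete G i i)"
    using G i unfolding adj_mat_def cofactor_def by simp
  ultimately show ?thesis by simp
qed

lemma mat_delete_Gm: assumes H: "H \<in> carrier_mat m n" and i: "i < n"
  shows "mat_delete (Gm c n H) i i = Gm c (n-1) (delcol H i)"
proof (rule eq_matI)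
  have D: "delcol H i \<in> carrier_mat m (n-1)" using delcol_carrier[OF H] .
  show "dim_row (mat_delete (Gm c n H) i i) = dim_row (Gm c (n-1) (delcol H i))"
    "dim_col (mat_delete (Gm c n H) i i) = dim_col (Gm c (n-1) (delcol H i))"
    using Gm_carrier[OF H, of c] Gm_carrier[OF D, of c] by auto
  fix a b assume "a < dim_row (Gm c (n-1) (delcol H i))" "b < dim_col (Gm c (n-1) (delcol H i))"
  then have ab: "a < n - 1" "b < n - 1" using Gm_carrier[OF D, of c] by auto
  define s where "s k = (if k < i then k else Suc k)" for k
  have s: "s a < n" "s b < n" "(s a = s b) = (a = b)" using ab unfolding s_def by auto
  have "mat_delete (Gm c n H) i i $$ (a,b) = Gm c n H $$ (s a, s b)"
    using ab Gm_carrier[OF H, of c] unfolding mat_delete_def s_def by auto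
  also have "\<dots> = (if a = b then 1 else 0) + of_real c * (\<Sum>r=0..<m. cnj (H$$(r,s a)) * H$$(r,s b))"
    using Gm_index[OF H s(1,2)] s(3) by simp
  also have "\<dots> = Gm c (n-1) (delcol H i) $$ (a,b)"
    using Gm_index[OF D ab] H ab unfolding delcol_def s_def by auto
  finally show "mat_delete (Gm c n H) i i $$ (a,b) = Gm c (n-1) (delcol H i) $$ (a,b)" .
qed

lemma Gm_det_ge1: assumes "H \<in> carrier_mat m n" and c: "c \<ge> 0"
  shows "\<exists>q. q \<ge> 1 \<and> det (Gm c n H) = complex_of_real q"
  using assms(1)
proof (induction n arbitrary: H)
  case 0
  then have G0: "Gm c 0 H \<in> carrier_mat 0 0" using Gm_carrier by blast
  then have "Gm c 0 H = 1\<^sub>m 0" by (intro eq_matI) (auto dest: carrier_matD)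
  then show ?case by (intro exI[of _ 1]) simp
next
  case (Suc k)
  note H = Suc.prems
  obtain B where B: "Gm c (Suc k) H * B = 1\<^sub>m (Suc k)" "B * Gm c (Suc k) H = 1\<^sub>m (Suc k)" "B \<in> carrier_mat (Suc k) (Suc k)"
    using Gm_inverse[OF H c] by metis
  obtain b where b: "B $$ (0,0) = complex_of_real b" "0 < b" "b \<le> 1"
    using Gm_inv_diag[OF H c B(3) B(1), of 0] by auto
  have D: "delcol H 0 \<in> carrier_mat m k" using delcol_carrier[OF H, of 0] by simp
  obtain q where q: "q \<ge> 1" "det (Gm c k (delcol H 0)) = complex_of_real q"
    using Suc.IH[OF D] by auto
  have "det (Gm c (Suc k) H) * B $$ (0,0) = det (Gm c k (delcol H 0))"
    using inv_diag_cofactor[OF Gm_carrier[OF H] B(3) B(2), of 0] mat_delete_Gm[OF H, of 0 c] by simp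
  then have "det (Gm c (Suc k) H) = complex_of_real (q / b)"
    using b q by (simp add: field_simps)
  moreover have "q / b \<ge> 1" using b q by (simp add: le_divide_eq)
  ultimately show ?case by blast
qed

lemma sylvester_det: fixes X :: "'a :: idom mat"
  assumes X: "X \<in> carrier_mat m n" and Y: "Y \<in> carrier_mat n m"
  shows "det (1\<^sub>m m + X * Y) = det (1\<^sub>m n + Y * X)"
proof -
  have XY: "X * Y \<in> carrier_mat m m" and YX: "Y * X \<in> carrier_mat n n" using X Y by auto
  define L where "L = four_block_mat (1\<^sub>m m) (0\<^sub>m m n) Y (1\<^sub>m n)"
  define U where "U = four_block_mat (1\<^sub>m m) (- X) (0\<^sub>m n m) (1\<^sub>m n + Y * X)"
  define U' where "U' = four_block_mat (1\<^sub>m m + X * Y) (- X) (0\<^sub>m n m) (1\<^sub>m n)"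
  have Lc: "L \<in> carrier_mat (m+n) (m+n)" unfolding L_def using Y by auto
  have Uc: "U \<in> carrier_mat (m+n) (m+n)" unfolding U_def using X YX by auto
  have U'c: "U' \<in> carrier_mat (m+n) (m+n)" unfolding U'_def using X XY by auto
  have "L * U = four_block_mat (1\<^sub>m m * 1\<^sub>m m + 0\<^sub>m m n * 0\<^sub>m n m) (1\<^sub>m m * - X + 0\<^sub>m m n * (1\<^sub>m n + Y * X))
      (Y * 1\<^sub>m m + 1\<^sub>m n * 0\<^sub>m n m) (Y * - X + 1\<^sub>m n * (1\<^sub>m n + Y * X))"
    unfolding L_def U_def by (rule mult_four_block_mat) (use X Y YX in auto)
  also have "\<dots> = four_block_mat (1\<^sub>m m) (- X) Y (1\<^sub>m n)"
  proof (rule cong_four_block_mat)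
    show "(1\<^sub>m m :: 'a mat) * 1\<^sub>m m + 0\<^sub>m m n * 0\<^sub>m n m = 1\<^sub>m m" by (simp add: right_mult_one_mat[OF one_carrier_mat])
    show "1\<^sub>m m * - X + 0\<^sub>m m n * (1\<^sub>m n + Y * X) = - X" using X YX by (intro eq_matI) auto
    show "Y * 1\<^sub>m m + 1\<^sub>m n * 0\<^sub>m n m = Y" using Y by (intro eq_matI) auto
    show "Y * - X + 1\<^sub>m n * (1\<^sub>m n + Y * X) = 1\<^sub>m n" using X Y YX by (intro eq_matI) auto
  qed
  also have "\<dots> = U' * L"
  proof -
    have "U' * L = four_block_mat ((1\<^sub>m m + X * Y) * 1\<^sub>m m + - X * Y) ((1\<^sub>m m + X * Y) * 0\<^sub>m m n + - X * 1\<^sub>m n)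
      (0\<^sub>m n m * 1\<^sub>m m + 1\<^sub>m n * Y) (0\<^sub>m n m * 0\<^sub>m m n + 1\<^sub>m n * 1\<^sub>m n)"
      unfolding L_def U'_def by (rule mult_four_block_mat) (use X Y XY in auto)
    also have "\<dots> = four_block_mat (1\<^sub>m m) (- X) Y (1\<^sub>m n)"
    proof (rule cong_four_block_mat)
      show "(1\<^sub>m m + X * Y) * 1\<^sub>m m + - X * Y = 1\<^sub>m m" using X Y XY by (intro eq_matI) auto
      show "(1\<^sub>m m + X * Y) * 0\<^sub>m m n + - X * 1\<^sub>m n = - X" using X XY by (intro eq_matI) auto
      show "(0\<^sub>m n m :: 'a mat) * 1\<^sub>m m + 1\<^sub>m n * Y = Y" using Y by (intro eq_matI) auto
      show "(0\<^sub>m n m :: 'a mat) * 0\<^sub>m m n + 1\<^sub>m n * 1\<^sub>m n = 1\<^sub>m n" by (intro eq_matI) auto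
    qed
    finally show ?thesis by simp
  qed
  finally have LU: "L * U = U' * L" .
  have dL: "det L = 1" unfolding L_def
    by (subst det_four_block_mat_upper_right_zero[of _ m _ n]) (use Y in auto)
  have dU: "det U = det (1\<^sub>m n + Y * X)" unfolding U_def
    by (subst det_four_block_mat_lower_left_zero[of _ m _ n]) (use X YX in auto)
  have dU': "det U' = det (1\<^sub>m m + X * Y)" unfolding U'_def
    by (subst det_four_block_mat_lower_left_zero[of _ m _ n]) (use X XY in auto)
  have "det (L * U) = det (U' * L)" using LU by simp
  then show ?thesis using det_mult[OF Lc Uc] det_mult[OF U'c Lc] dL dU dU' by simp
qed

lemma det_HHh: assumes H: "H \<in> carrier_mat m n"
  shows "det (1\<^sub>m m + complex_of_real c \<cdot>\<^sub>m (H * herm H)) = det (Gm c n H)"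
proof -
  have hH: "herm H \<in> carrier_mat n m" using H by auto
  have "1\<^sub>m m + complex_of_real c \<cdot>\<^sub>m (H * herm H) = 1\<^sub>m m + (complex_of_real c \<cdot>\<^sub>m H) * herm H"
    using mult_smult_assoc_mat[OF H hH] by simp
  also have "det \<dots> = det (1\<^sub>m n + herm H * (complex_of_real c \<cdot>\<^sub>m H))"
    by (rule sylvester_det) (use H hH in auto)
  also have "herm H * (complex_of_real c \<cdot>\<^sub>m H) = complex_of_real c \<cdot>\<^sub>m (herm H * H)"
    using mult_smult_distrib[OF hH H] by simp
  finally show ?thesis unfolding Gm_def .
qed

lemma HHh_Gm: "1\<^sub>m m + complex_of_real c \<cdot>\<^sub>m (H * herm H) = Gm c m (herm H)"
  unfolding Gm_def by simp

lemma det_HHh_ge1: assumes H: "H \<in> carrier_mat m n" and c: "c \<ge> 0"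
  shows "Re (det (1\<^sub>m m + complex_of_real c \<cdot>\<^sub>m (H * herm H))) \<ge> 1"
    "complex_of_real (Re (det (1\<^sub>m m + complex_of_real c \<cdot>\<^sub>m (H * herm H)))) = det (1\<^sub>m m + complex_of_real c \<cdot>\<^sub>m (H * herm H))"
proof -
  have hH: "herm H \<in> carrier_mat n m" using H by auto
  obtain q where "q \<ge> 1" "det (Gm c m (herm H)) = complex_of_real q" using Gm_det_ge1[OF hH c] by auto
  then show "Re (det (1\<^sub>m m + complex_of_real c \<cdot>\<^sub>m (H * herm H))) \<ge> 1"
    "complex_of_real (Re (det (1\<^sub>m m + complex_of_real c \<cdot>\<^sub>m (H * herm H)))) = det (1\<^sub>m m + complex_of_real c \<cdot>\<^sub>m (H * herm H))"
    unfolding HHh_Gm by auto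
qed

lemma pointwise: assumes H: "H \<in> carrier_mat m n" and snr: "snr > 0" and i: "i < n"
  shows "log 2 (1 + sinr_mmse snr m n H i) =
    log 2 (Re (det (1\<^sub>m m + complex_of_real (snr / real n) \<cdot>\<^sub>m (H * herm H)))) -
    log 2 (Re (det (1\<^sub>m m + complex_of_real (snr / real n) \<cdot>\<^sub>m (delcol H i * herm (delcol H i)))))"
proof -
  define c where "c = snr / real n"
  have c: "c \<ge> 0" using snr unfolding c_def by simp
  have D: "delcol H i \<in> carrier_mat m (n-1)" using delcol_carrier[OF H] .
  obtain B where B: "mat_inverse (Gm c n H) = Some B" "Gm c n H * B = 1\<^sub>m n" "B * Gm c n H = 1\<^sub>m n" "B \<in> carrier_mat n n"
    using Gm_inverse[OF H c] by metis
  obtain b where b: "B $$ (i,i) = complex_of_real b" "0 < b" "b \<le> 1"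
    using Gm_inv_diag[OF H c B(4) B(2) i] by auto
  obtain q where q: "q \<ge> 1" "det (Gm c n H) = complex_of_real q" using Gm_det_ge1[OF H c] by auto
  obtain q' where q': "q' \<ge> 1" "det (Gm c (n-1) (delcol H i)) = complex_of_real q'" using Gm_det_ge1[OF D c] by auto
  have "det (Gm c n H) * B $$ (i,i) = det (Gm c (n-1) (delcol H i))"
    using inv_diag_cofactor[OF Gm_carrier[OF H] B(4) B(3) i] mat_delete_Gm[OF H i, of c] by simp
  then have qb: "q * b = q'" using q q' b by (metis of_real_eq_iff of_real_mult)
  have "sinr_mmse snr m n H i = 1 / b - 1"
    unfolding sinr_mmse_def using B(1) b unfolding Gm_def c_def by simp
  then have "1 + sinr_mmse snr m n H i = 1 / b" by simp
  also have "1 / b = q / q'" using qb b q q' by (simp add: field_simps)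
  finally have "1 + sinr_mmse snr m n H i = q / q'" .
  then have "log 2 (1 + sinr_mmse snr m n H i) = log 2 q - log 2 q'"
    using q q' by (simp add: log_divide)
  moreover have "Re (det (1\<^sub>m m + complex_of_real c \<cdot>\<^sub>m (H * herm H))) = q"
    using det_HHh[OF H] q by simp
  moreover have "Re (det (1\<^sub>m m + complex_of_real c \<cdot>\<^sub>m (delcol H i * herm (delcol H i)))) = q'"
    using det_HHh[OF D] q' by simp
  ultimately show ?thesis unfolding c_def by simp
qed



lemma det_bound: fixes A :: "complex mat"
  assumes A: "A \<in> carrier_mat k k" and M: "\<And>a b. a < k \<Longrightarrow> b < k \<Longrightarrow> cmod (A $$ (a,b)) \<le> M" and M0: "M \<ge> 0"
  shows "cmod (det A) \<le> fact k * M ^ k"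
proof -
  have "cmod (det A) \<le> (\<Sum>p\<in>{p. p permutes {0..<k}}. cmod (of_int (sign p) * (\<Prod>i = 0..<k. A $$ (i, p i))))"
    unfolding det_def'[OF A] by (rule norm_sum)
  also have "\<dots> \<le> (\<Sum>p\<in>{p. p permutes {0..<k}}. M ^ k)"
  proof (rule sum_mono)
    fix p assume p: "p \<in> {p. p permutes {0..<k}}"
    have "cmod (of_int (sign p) * (\<Prod>i = 0..<k. A $$ (i, p i))) = (\<Prod>i = 0..<k. cmod (A $$ (i, p i)))"
      by (simp add: norm_mult prod_norm sign_def)
    also have "\<dots> \<le> (\<Prod>i = 0..<k. M)"
      by (rule prod_mono) (use p M permutes_in_image in auto)
    finally show "cmod (of_int (sign p) * (\<Prod>i = 0..<k. A $$ (i, p i))) \<le> M ^ k" by simp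
  qed
  also have "\<dots> = fact k * M ^ k"
    using card_permutations[of "{0..<k}" k] by simp
  finally show ?thesis .
qed

lemma det_measurable: fixes A :: "'b \<Rightarrow> complex mat"
  assumes A: "\<And>\<omega>. A \<omega> \<in> carrier_mat k k"
  and M: "\<And>a b. a < k \<Longrightarrow> b < k \<Longrightarrow> (\<lambda>\<omega>. A \<omega> $$ (a,b)) \<in> borel_measurable N"
  shows "(\<lambda>\<omega>. det (A \<omega>)) \<in> borel_measurable N"
proof -
  have "(\<lambda>\<omega>. det (A \<omega>)) = (\<lambda>\<omega>. \<Sum>p\<in>{p. p permutes {0..<k}}. of_int (sign p) * (\<Prod>i = 0..<k. A \<omega> $$ (i, p i)))"
    using det_def'[OF A] by auto
  also have "\<dots> \<in> borel_measurable N"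
  proof (intro borel_measurable_sum borel_measurable_times borel_measurable_prod)
    fix p i assume "p \<in> {p. p permutes {0..<k}}" "i \<in> {0..<k}"
    then show "(\<lambda>\<omega>. A \<omega> $$ (i, p i)) \<in> borel_measurable N"
      using M permutes_in_image by fastforce
  qed simp
  finally show ?thesis .
qed

lemma to_mat_carrier[simp]: "to_mat m n \<omega> \<in> carrier_mat m n"
  unfolding to_mat_def by simp

lemma HHh_index: assumes "a < m" "b < m"
  shows "(1\<^sub>m m + complex_of_real c \<cdot>\<^sub>m (to_mat m n \<omega> * herm (to_mat m n \<omega>))) $$ (a,b) =
    (if a = b then 1 else 0) + complex_of_real c * (\<Sum>k=0..<n. \<omega> (a,k) * cnj (\<omega> (b,k)))"
  using assms unfolding to_mat_def by (auto simp: scalar_prod_def)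

lemma HHh_carrier: "1\<^sub>m m + complex_of_real c \<cdot>\<^sub>m (to_mat m n \<omega> * herm (to_mat m n \<omega>)) \<in> carrier_mat m m"
proof -
  have h: "herm (to_mat m n \<omega>) \<in> carrier_mat n m" using herm_carrier[of "to_mat m n \<omega>"] unfolding to_mat_def by simp
  show ?thesis by (intro add_carrier_mat one_carrier_mat smult_carrier_mat mult_carrier_mat[OF to_mat_carrier h])
qed

lemma cnj_measurable: "cnj \<in> borel_measurable borel"
  by (intro borel_measurable_continuous_onI linear_continuous_on bounded_linear_cnj)

definition Fd :: "real \<Rightarrow> nat \<Rightarrow> nat \<Rightarrow> ((nat \<times> nat) \<Rightarrow> complex) \<Rightarrow> real" where
  "Fd c m n \<omega> = log 2 (Re (det (1\<^sub>m m + complex_of_real c \<cdot>\<^sub>m (to_mat m n \<omega> * herm (to_mat m n \<omega>)))))"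

lemma Fd_measurable: assumes D: "sets D = sets borel"
  shows "Fd c m n \<in> borel_measurable (rand_mat_space D m n)"
proof -
  have comp: "(\<lambda>\<omega>. \<omega> j) \<in> borel_measurable (rand_mat_space D m n)" if "j \<in> {0..<m} \<times> {0..<n}" for j
  proof -
    have "(\<lambda>\<omega>. \<omega> j) \<in> measurable (rand_mat_space D m n) D"
      unfolding rand_mat_space_def using measurable_component_singleton[OF that, of "\<lambda>_. D"] by simp
    then show ?thesis by (subst (asm) measurable_cong_sets[OF refl D])
  qed
  have "(\<lambda>\<omega>. det (1\<^sub>m m + complex_of_real c \<cdot>\<^sub>m (to_mat m n \<omega> * herm (to_mat m n \<omega>)))) \<in> borel_measurable (rand_mat_space D m n)"
  proof (rule det_measurable[OF HHh_carrier])
    fix a b assume ab: "a < m" "b < m"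
    show "(\<lambda>\<omega>. (1\<^sub>m m + complex_of_real c \<cdot>\<^sub>m (to_mat m n \<omega> * herm (to_mat m n \<omega>))) $$ (a,b)) \<in> borel_measurable (rand_mat_space D m n)"
      unfolding HHh_index[OF ab]
      by (intro borel_measurable_add borel_measurable_times borel_measurable_sum borel_measurable_const
          measurable_compose[OF comp cnj_measurable] comp) (use ab in auto)
  qed
  then show ?thesis unfolding Fd_def by measurable
qed



definition Ssq :: "nat \<Rightarrow> nat \<Rightarrow> ((nat \<times> nat) \<Rightarrow> complex) \<Rightarrow> real" where
  "Ssq m n \<omega> = (\<Sum>j\<in>{0..<m} \<times> {0..<n}. (cmod (\<omega> j))\<^sup>2)"

lemma row_le_Ssq: assumes "a < m" shows "(\<Sum>k=0..<n. (cmod (\<omega> (a,k)))\<^sup>2) \<le> Ssq m n \<omega>"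
proof -
  have "(\<Sum>k=0..<n. (cmod (\<omega> (a,k)))\<^sup>2) = (\<Sum>j\<in>{a} \<times> {0..<n}. (cmod (\<omega> j))\<^sup>2)"
  proof -
    have e: "{a} \<times> {0..<n} = (\<lambda>k. (a,k)) ` {0..<n}" by auto
    show ?thesis unfolding e by (subst sum.reindex) (auto simp: inj_on_def)
  qed
  also have "\<dots> \<le> Ssq m n \<omega>" unfolding Ssq_def
    by (rule sum_mono2) (use assms in auto)
  finally show ?thesis .
qed

lemma Ssq_nonneg: "Ssq m n \<omega> \<ge> 0" unfolding Ssq_def by (auto intro: sum_nonneg)

lemma entry_bound0: assumes ab: "a < m" "b < m" and c: "c \<ge> 0"
  shows "cmod ((1\<^sub>m m + complex_of_real c \<cdot>\<^sub>m (to_mat m n \<omega> * herm (to_mat m n \<omega>))) $$ (a,b)) \<le> 1 + c * (\<Sum>k=0..<n. cmod (\<omega> (a,k)) * cmod (\<omega> (b,k)))"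
proof -
  have "cmod ((1\<^sub>m m + complex_of_real c \<cdot>\<^sub>m (to_mat m n \<omega> * herm (to_mat m n \<omega>))) $$ (a,b))
     \<le> cmod (if a = b then 1 else 0 :: complex) + cmod (complex_of_real c * (\<Sum>k=0..<n. \<omega> (a,k) * cnj (\<omega> (b,k))))"
    unfolding HHh_index[OF ab] by (rule norm_triangle_ineq)
  also have "\<dots> \<le> 1 + c * (\<Sum>k=0..<n. cmod (\<omega> (a,k)) * cmod (\<omega> (b,k)))"
  proof (rule add_mono)
    show "cmod (if a = b then 1 else 0 :: complex) \<le> 1" by simp
    have "cmod (\<Sum>k=0..<n. \<omega> (a,k) * cnj (\<omega> (b,k))) \<le> (\<Sum>k=0..<n. cmod (\<omega> (a,k) * cnj (\<omega> (b,k))))"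
      by (rule norm_sum)
    also have "\<dots> = (\<Sum>k=0..<n. cmod (\<omega> (a,k)) * cmod (\<omega> (b,k)))"
      by (simp add: norm_mult)
    finally have "cmod (\<Sum>k=0..<n. \<omega> (a,k) * cnj (\<omega> (b,k))) \<le> (\<Sum>k=0..<n. cmod (\<omega> (a,k)) * cmod (\<omega> (b,k)))" .
    then show "cmod (complex_of_real c * (\<Sum>k=0..<n. \<omega> (a,k) * cnj (\<omega> (b,k)))) \<le> c * (\<Sum>k=0..<n. cmod (\<omega> (a,k)) * cmod (\<omega> (b,k)))"
      using c unfolding norm_mult by (simp add: mult_left_mono)
  qed
  finally show ?thesis .
qed

lemma amgm: "(x::real) * y \<le> x\<^sup>2 + y\<^sup>2" if "x \<ge> 0" "y \<ge> 0"
proof -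
  have "0 \<le> (x - y)\<^sup>2" by simp
  then have "2 * x * y \<le> x\<^sup>2 + y\<^sup>2" by (simp add: power2_diff)
  moreover have "0 \<le> x * y" using that by simp
  ultimately show ?thesis by linarith
qed
lemma entry_bound: assumes ab: "a < m" "b < m" and c: "c \<ge> 0"
  shows "cmod ((1\<^sub>m m + complex_of_real c \<cdot>\<^sub>m (to_mat m n \<omega> * herm (to_mat m n \<omega>))) $$ (a,b)) \<le> 1 + 2 * c * Ssq m n \<omega>"
proof -
  have "(\<Sum>k=0..<n. cmod (\<omega> (a,k)) * cmod (\<omega> (b,k))) \<le> (\<Sum>k=0..<n. (cmod (\<omega> (a,k)))\<^sup>2 + (cmod (\<omega> (b,k)))\<^sup>2)"
    by (rule sum_mono) (rule amgm, auto)
  also have "\<dots> = (\<Sum>k=0..<n. (cmod (\<omega> (a,k)))\<^sup>2) + (\<Sum>k=0..<n. (cmod (\<omega> (b,k)))\<^sup>2)"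
    by (rule sum.distrib)
  also have "\<dots> \<le> Ssq m n \<omega> + Ssq m n \<omega>"
    by (rule add_mono) (rule row_le_Ssq, use ab in auto)+
  finally have T: "(\<Sum>k=0..<n. cmod (\<omega> (a,k)) * cmod (\<omega> (b,k))) \<le> 2 * Ssq m n \<omega>" by simp
  have "c * (\<Sum>k=0..<n. cmod (\<omega> (a,k)) * cmod (\<omega> (b,k))) \<le> c * (2 * Ssq m n \<omega>)"
    using T c by (rule mult_left_mono)
  then show ?thesis using entry_bound0[OF ab c, where n=n and \<omega>=\<omega>] by simp
qed

lemma Fd_bounds: assumes c: "c \<ge> 0"
  shows "0 \<le> Fd c m n \<omega>" "Fd c m n \<omega> \<le> log 2 (fact m) + real m * (2 * c / ln 2) * Ssq m n \<omega>"
proof -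
  let ?A = "1\<^sub>m m + complex_of_real c \<cdot>\<^sub>m (to_mat m n \<omega> * herm (to_mat m n \<omega>))"
  have ge1: "Re (det ?A) \<ge> 1" and re: "complex_of_real (Re (det ?A)) = det ?A"
    using det_HHh_ge1[OF to_mat_carrier c] by auto
  show "0 \<le> Fd c m n \<omega>" unfolding Fd_def using ge1 by simp
  define M where "M = 1 + 2 * c * Ssq m n \<omega>"
  have M1: "M \<ge> 1" unfolding M_def using c Ssq_nonneg[of m n \<omega>] by simp
  have "cmod (det ?A) \<le> fact m * M ^ m"
    by (rule det_bound[OF HHh_carrier]) (use entry_bound c M1 in \<open>auto simp: M_def\<close>)
  moreover have "cmod (det ?A) = Re (det ?A)"
  proof -
    have "cmod (det ?A) = cmod (complex_of_real (Re (det ?A)))" by (simp only: re)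
    also have "\<dots> = Re (det ?A)" using ge1 by simp
    finally show ?thesis .
  qed
  ultimately have le: "Re (det ?A) \<le> fact m * M ^ m" by simp
  have "Fd c m n \<omega> \<le> log 2 (fact m * M ^ m)"
    unfolding Fd_def using ge1 le by (subst log_le_cancel_iff) auto
  also have "\<dots> = log 2 (fact m) + real m * log 2 M"
    using M1 by (simp add: log_mult log_nat_power)
  also have "log 2 M \<le> (2 * c / ln 2) * Ssq m n \<omega>"
  proof -
    have "ln M \<le> 2 * c * Ssq m n \<omega>" unfolding M_def
      using ln_add_one_self_le_self[of "2 * c * Ssq m n \<omega>"] c Ssq_nonneg[of m n \<omega>] by simp
    then show ?thesis unfolding log_def by (simp add: divide_right_mono)
  qed
  finally show "Fd c m n \<omega> \<le> log 2 (fact m) + real m * (2 * c / ln 2) * Ssq m n \<omega>"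
    by (simp add: mult_left_mono mult.assoc)
qed

lemma Ssq_integrable: assumes D: "prob_space D" "sets D = sets borel" "integrable D (\<lambda>z. (cmod z)\<^sup>2)"
  shows "integrable (rand_mat_space D m n) (Ssq m n)"
  unfolding Ssq_def
proof (rule Bochner_Integration.integrable_sum)
  fix j assume j: "j \<in> {0..<m} \<times> {0..<n}"
  have meas: "(\<lambda>\<omega>. \<omega> j) \<in> measurable (rand_mat_space D m n) D"
    unfolding rand_mat_space_def using measurable_component_singleton[OF j, of "\<lambda>_. D"] by simp
  have "distr (rand_mat_space D m n) D (\<lambda>\<omega>. \<omega> j) = D"
    unfolding rand_mat_space_def using distr_PiM_component[of "{0..<m} \<times> {0..<n}" "\<lambda>_. D" j] D(1) j by simp
  moreover have "(\<lambda>z. (cmod z)\<^sup>2) \<in> borel_measurable D"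
    using D(2) by (subst measurable_cong_sets[OF D(2) refl]) measurable
  ultimately show "integrable (rand_mat_space D m n) (\<lambda>\<omega>. (cmod (\<omega> j))\<^sup>2)"
    using integrable_distr_eq[OF meas, of "\<lambda>z. (cmod z)\<^sup>2"] D(3) by simp
qed

lemma rms_prob: "prob_space D \<Longrightarrow> prob_space (rand_mat_space D m n)"
  unfolding rand_mat_space_def by (intro prob_space_PiM) auto

lemma Fd_integrable: assumes D: "prob_space D" "sets D = sets borel" "integrable D (\<lambda>z. (cmod z)\<^sup>2)"
  and c: "c \<ge> 0"
  shows "integrable (rand_mat_space D m n) (Fd c m n)"
proof (rule Bochner_Integration.integrable_bound)
  show "integrable (rand_mat_space D m n) (\<lambda>\<omega>. log 2 (fact m) + real m * (2 * c / ln 2) * Ssq m n \<omega>)"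
  proof (intro Bochner_Integration.integrable_add integrable_mult_right)
    interpret prob_space "rand_mat_space D m n" using rms_prob[OF D(1)] .
    show "integrable (rand_mat_space D m n) (\<lambda>x. log 2 (fact m))" by simp
  qed (use Ssq_integrable[OF D] in auto)
  show "Fd c m n \<in> borel_measurable (rand_mat_space D m n)" by (rule Fd_measurable[OF D(2)])
  show "AE \<omega> in rand_mat_space D m n. norm (Fd c m n \<omega>) \<le> norm (log 2 (fact m) + real m * (2 * c / ln 2) * Ssq m n \<omega>)"
  proof (intro AE_I2)
    fix \<omega>
    have "norm (Fd c m n \<omega>) = Fd c m n \<omega>" using Fd_bounds(1)[OF c] by simp
    also have "\<dots> \<le> log 2 (fact m) + real m * (2 * c / ln 2) * Ssq m n \<omega>" by (rule Fd_bounds(2)[OF c])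
    also have "\<dots> \<le> norm (log 2 (fact m) + real m * (2 * c / ln 2) * Ssq m n \<omega>)" unfolding real_norm_def by (rule abs_ge_self)
    finally show "norm (Fd c m n \<omega>) \<le> norm (log 2 (fact m) + real m * (2 * c / ln 2) * Ssq m n \<omega>)" .
  qed
qed



definition sig :: "nat \<Rightarrow> nat \<times> nat \<Rightarrow> nat \<times> nat" where
  "sig i = (\<lambda>(r,k). (r, if k < i then k else Suc k))"

definition phi :: "nat \<Rightarrow> nat \<Rightarrow> nat \<Rightarrow> ((nat \<times> nat) \<Rightarrow> complex) \<Rightarrow> ((nat \<times> nat) \<Rightarrow> complex)" where
  "phi m n i \<omega> = (\<lambda>j\<in>{0..<m} \<times> {0..<n-1}. \<omega> (sig i j))"

lemma to_mat_phi: assumes "i < n"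
  shows "to_mat m (n-1) (phi m n i \<omega>) = delcol (to_mat m n \<omega>) i"
  by (rule eq_matI) (use assms in \<open>auto simp: to_mat_def delcol_def phi_def sig_def\<close>)

lemma sig_inj: "inj_on (sig i) J" unfolding sig_def inj_on_def by (auto split: if_splits)

lemma sig_maps: assumes "i < n" shows "sig i \<in> {0..<m} \<times> {0..<n-1} \<rightarrow> {0..<m} \<times> {0..<n}"
  using assms unfolding sig_def by auto

lemma phi_measurable: "phi m n i \<in> measurable (rand_mat_space D m n) (rand_mat_space D m (n-1))"
  unfolding phi_def rand_mat_space_def
  by (intro measurable_restrict measurable_component_singleton) (auto simp: sig_def)

lemma phi_distr: assumes D: "prob_space D" and i: "i < n"
  shows "distr (rand_mat_space D m n) (rand_mat_space D m (n-1)) (phi m n i) = rand_mat_space D m (n-1)"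
  unfolding phi_def rand_mat_space_def
  using distr_PiM_reindex[of "{0..<m} \<times> {0..<n}" "\<lambda>_. D" "sig i" "{0..<m} \<times> {0..<n-1}"] D sig_inj sig_maps[OF i]
  by simp

lemma Fd_phi: assumes D: "prob_space D" "sets D = sets borel" "integrable D (\<lambda>z. (cmod z)\<^sup>2)"
  and i: "i < n" and c: "c \<ge> 0"
  shows "integrable (rand_mat_space D m n) (\<lambda>\<omega>. Fd c m (n-1) (phi m n i \<omega>))"
    "(\<integral>\<omega>. Fd c m (n-1) (phi m n i \<omega>) \<partial>rand_mat_space D m n) = (\<integral>\<omega>. Fd c m (n-1) \<omega> \<partial>rand_mat_space D m (n-1))"
proof -
  have F: "Fd c m (n-1) \<in> borel_measurable (rand_mat_space D m (n-1))" by (rule Fd_measurable[OF D(2)])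
  show "integrable (rand_mat_space D m n) (\<lambda>\<omega>. Fd c m (n-1) (phi m n i \<omega>))"
    using integrable_distr_eq[OF phi_measurable[of m n i D] F] phi_distr[OF D(1) i, of m] Fd_integrable[OF D c, of m "n-1"] by simp
  show "(\<integral>\<omega>. Fd c m (n-1) (phi m n i \<omega>) \<partial>rand_mat_space D m n) = (\<integral>\<omega>. Fd c m (n-1) \<omega> \<partial>rand_mat_space D m (n-1))"
    using integral_distr[OF phi_measurable[of m n i D] F] phi_distr[OF D(1) i, of m] by simp
qed



lemma zero_col_prod: assumes "X \<in> carrier_mat m 0" shows "X * herm X = 0\<^sub>m m m"
  by (rule eq_matI) (use assms in \<open>auto simp: scalar_prod_def\<close>)

lemma Fd_scalar: assumes "n \<ge> 1" "snr > 0"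
  shows "Fd (((real n - 1) / real n * snr) / real (n - 1)) m (n-1) \<omega> = Fd (snr / real n) m (n-1) \<omega>"
proof (cases "n = 1")
  case True
  have "to_mat m (n-1) \<omega> * herm (to_mat m (n-1) \<omega>) = 0\<^sub>m m m"
    using True by (intro zero_col_prod) simp
  then show ?thesis unfolding Fd_def by simp
next
  case False
  then have "real (n - 1) = real n - 1" "real n - 1 \<noteq> 0" using assms by (auto simp: of_nat_diff)
  then have "((real n - 1) / real n * snr) / real (n - 1) = snr / real n" by (simp add: field_simps)
  then show ?thesis by simp
qed

theorem corollary1:
  fixes D :: "complex measure" and snr :: real and Nr Nt :: nat
  assumes "prob_space D"
    and "sets D = sets borel"
    and "integrable D (\<lambda>z. (cmod z)\<^sup>2)"
    and "(\<integral>z. (cmod z)\<^sup>2 \<partial>D) = 1"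
    and "Nr \<ge> 1" and "Nt \<ge> 1"
    and "snr > 0"
  shows "I_mmse D snr Nr Nt =
           real Nt * (I_opt D snr Nr Nt - I_opt D ((real Nt - 1) / real Nt * snr) Nr (Nt - 1))"
proof -
  note D = assms(1-3)
  define c where "c = snr / real Nt"
  have c: "c \<ge> 0" using assms(7) unfolding c_def by simp
  have Iopt1: "I_opt D snr Nr Nt = (\<integral>\<omega>. Fd c Nr Nt \<omega> \<partial>rand_mat_space D Nr Nt)"
    unfolding I_opt_def Fd_def c_def ..
  have Iopt2: "I_opt D ((real Nt - 1) / real Nt * snr) Nr (Nt - 1) = (\<integral>\<omega>. Fd c Nr (Nt-1) \<omega> \<partial>rand_mat_space D Nr (Nt-1))"
    unfolding c_def using Fd_scalar[OF assms(6,7)] unfolding I_opt_def Fd_def by simp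
  have tm: "(\<integral>\<omega>. log 2 (1 + sinr_mmse snr Nr Nt (to_mat Nr Nt \<omega>) i) \<partial>rand_mat_space D Nr Nt)
      = I_opt D snr Nr Nt - I_opt D ((real Nt - 1) / real Nt * snr) Nr (Nt - 1)" if i: "i < Nt" for i
  proof -
    have "(\<integral>\<omega>. log 2 (1 + sinr_mmse snr Nr Nt (to_mat Nr Nt \<omega>) i) \<partial>rand_mat_space D Nr Nt)
        = (\<integral>\<omega>. Fd c Nr Nt \<omega> - Fd c Nr (Nt-1) (phi Nr Nt i \<omega>) \<partial>rand_mat_space D Nr Nt)"
    proof (rule Bochner_Integration.integral_cong[OF refl])
      fix \<omega>
      show "log 2 (1 + sinr_mmse snr Nr Nt (to_mat Nr Nt \<omega>) i) = Fd c Nr Nt \<omega> - Fd c Nr (Nt-1) (phi Nr Nt i \<omega>)"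
        unfolding Fd_def to_mat_phi[OF i] c_def by (rule pointwise[OF to_mat_carrier assms(7) i])
    qed
    also have "\<dots> = (\<integral>\<omega>. Fd c Nr Nt \<omega> \<partial>rand_mat_space D Nr Nt) - (\<integral>\<omega>. Fd c Nr (Nt-1) (phi Nr Nt i \<omega>) \<partial>rand_mat_space D Nr Nt)"
      by (rule Bochner_Integration.integral_diff[OF Fd_integrable[OF D c] Fd_phi(1)[OF D i c]])
    also have "\<dots> = I_opt D snr Nr Nt - I_opt D ((real Nt - 1) / real Nt * snr) Nr (Nt - 1)"
      unfolding Iopt1 Iopt2 Fd_phi(2)[OF D i c] ..
    finally show ?thesis .
  qed
  have "I_mmse D snr Nr Nt = (\<Sum>i<Nt. I_opt D snr Nr Nt - I_opt D ((real Nt - 1) / real Nt * snr) Nr (Nt - 1))"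
    unfolding I_mmse_def by (rule sum.cong) (auto simp: tm)
  also have "\<dots> = real Nt * (I_opt D snr Nr Nt - I_opt D ((real Nt - 1) / real Nt * snr) Nr (Nt - 1))"
    by simp
  finally show ?thesis .
qed


end
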